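(* Every $\mathcal{L}$-definable subset $A$ of $K^{n}$ with an accumulation point $a\in K^{n}$ has, after a permutation of the coordinates, an $\mathcal{L}$-definable $x_{1}$-fiber shrinking at $a$.
   Context: Standing assumptions: $K$ is a Henselian valued field of equicharacteristic zero whose valuation $v:K\to\Gamma\cup\{\infty\}$ has rank one ($\Gamma\subset(\mathbb{R},+)$), with the topology of its absolute value; $\mathcal{L}$ is the three-sorted Denef–Pas language (sorts $K$, $\Gamma$, $\Bbbk$; maps $v$ and an angular component map $\overline{ac}:K\to\Bbbk$, multiplicative, $\overline{ac}(0)=0$, equal to the residue map on units of the valuation ring); definable means definable with parameters. Definition: let $A\subset K^{n}$ be $\mathcal{L}$-definable with accumulation point $a=(a_{1},\ldots,a_{n})$, and let $E\subset K$ be $\mathcal{L}$-definable with accumulation point $a_{1}$. An $\mathcal{L}$-definable family $\Phi=\bigcup_{t\in E}\{t\}\times\Phi_{t}\subset A$ (with $\Phi_t\subset K^{n-1}$) is an $\mathcal{L}$-definable $x_{1}$-fiber shrinking for $A$ at $a$ if for every neighbourhood $U$ of $(a_{2},\ldots,a_{n})$ in $K^{n-1}$ there is a neighbourhood $V$ of $a_{1}$ in $K$ with $\emptyset\neq\Phi_{t}\subset U$ for every $t\in V\cap E$, $t\neq a_{1}$. (For $n=1$, $A$ itself is an $x_1$-fiber shrinking.) *)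

theory Defs
  imports "HOL-Computational_Algebra.Polynomial" "HOL-Library.Extended_Real"
          "HOL-Combinatorics.Permutations"
begin

text \<open>The residue map res is defined on the valuation ring O = {x. v x >= 0}; it is a
  surjective ring homomorphism O -> 'r with kernel the maximal ideal {x. v x > 0},
  so 'r is (isomorphic to) the residue field.  ac is an angular component map.\<close>

definition valuation_ring :: "('k::field \<Rightarrow> ereal) \<Rightarrow> 'k set" where
  "valuation_ring v = {x. v x \<ge> 0}"

definition henselian_rank1_eq0_acfield ::
  "('k::field \<Rightarrow> ereal) \<Rightarrow> ('k \<Rightarrow> 'r::field_char_0) \<Rightarrow> ('k \<Rightarrow> 'r) \<Rightarrow> bool" where
  "henselian_rank1_eq0_acfield v res ac \<longleftrightarrow>
     \<comment> \<open>rank-one (real-valued) valuation\<close>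
     (\<forall>x. v x = \<infinity> \<longleftrightarrow> x = 0) \<and>
     (\<forall>x. x \<noteq> 0 \<longrightarrow> v x \<noteq> -\<infinity> \<and> v x \<noteq> \<infinity>) \<and>
     (\<forall>x y. v (x * y) = v x + v y) \<and>
     (\<forall>x y. min (v x) (v y) \<le> v (x + y)) \<and>
     (\<exists>x. v x \<noteq> 0 \<and> v x \<noteq> \<infinity>) \<and>
     \<comment> \<open>residue map: surjective ring homomorphism O -> 'r with kernel the maximal ideal\<close>
     (\<forall>x\<in>valuation_ring v. \<forall>y\<in>valuation_ring v. res (x + y) = res x + res y) \<and>
     (\<forall>x\<in>valuation_ring v. \<forall>y\<in>valuation_ring v. res (x * y) = res x * res y) \<and>
     res 1 = 1 \<and>
     (\<forall>x\<in>valuation_ring v. res x = 0 \<longleftrightarrow> v x > 0) \<and>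
     (\<forall>r. \<exists>x\<in>valuation_ring v. res x = r) \<and>
     \<comment> \<open>angular component map\<close>
     (\<forall>x y. ac (x * y) = ac x * ac y) \<and>
     ac 0 = 0 \<and>
     (\<forall>x. v x = 0 \<longrightarrow> ac x = res x) \<and>
     \<comment> \<open>Henselian (Hensel's lemma for simple roots)\<close>
     (\<forall>f a. (\<forall>i. coeff f i \<in> valuation_ring v) \<and> a \<in> valuation_ring v \<and>
            v (poly f a) > 0 \<and> v (poly (pderiv f) a) = 0 \<longrightarrow>
            (\<exists>b\<in>valuation_ring v. poly f b = 0 \<and> v (b - a) > 0))"

section \<open>The three-sorted Denef--Pas language\<close>

datatype 'k kterm = KVar nat | KConst 'k | KAdd "'k kterm" "'k kterm"
  | KMul "'k kterm" "'k kterm" | KNeg "'k kterm"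

datatype 'k gterm = GVar nat | GVal "'k kterm" | GAdd "'k gterm" "'k gterm"

datatype 'k rterm = RVar nat | RAc "'k kterm" | RAdd "'k rterm" "'k rterm"
  | RMul "'k rterm" "'k rterm" | RNeg "'k rterm"

datatype 'k fm = FKEq "'k kterm" "'k kterm" | FGLe "'k gterm" "'k gterm"
  | FREq "'k rterm" "'k rterm" | FNot "'k fm" | FAnd "'k fm" "'k fm"
  | FExK nat "'k fm" | FExG nat "'k fm" | FExR nat "'k fm"

primrec keval :: "(nat \<Rightarrow> 'k::field) \<Rightarrow> 'k kterm \<Rightarrow> 'k" where
  "keval \<rho> (KVar i) = \<rho> i"
| "keval \<rho> (KConst c) = c"
| "keval \<rho> (KAdd s t) = keval \<rho> s + keval \<rho> t"
| "keval \<rho> (KMul s t) = keval \<rho> s * keval \<rho> t"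
| "keval \<rho> (KNeg s) = - keval \<rho> s"

primrec geval :: "('k::field \<Rightarrow> ereal) \<Rightarrow> (nat \<Rightarrow> 'k) \<Rightarrow> (nat \<Rightarrow> ereal) \<Rightarrow> 'k gterm \<Rightarrow> ereal" where
  "geval v \<rho> \<gamma> (GVar i) = \<gamma> i"
| "geval v \<rho> \<gamma> (GVal t) = v (keval \<rho> t)"
| "geval v \<rho> \<gamma> (GAdd s t) = geval v \<rho> \<gamma> s + geval v \<rho> \<gamma> t"

primrec reval :: "('k::field \<Rightarrow> 'r::field) \<Rightarrow> (nat \<Rightarrow> 'k) \<Rightarrow> (nat \<Rightarrow> 'r) \<Rightarrow> 'k rterm \<Rightarrow> 'r" where
  "reval ac \<rho> \<xi> (RVar i) = \<xi> i"
| "reval ac \<rho> \<xi> (RAc t) = ac (keval \<rho> t)"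
| "reval ac \<rho> \<xi> (RAdd s t) = reval ac \<rho> \<xi> s + reval ac \<rho> \<xi> t"
| "reval ac \<rho> \<xi> (RMul s t) = reval ac \<rho> \<xi> s * reval ac \<rho> \<xi> t"
| "reval ac \<rho> \<xi> (RNeg s) = - reval ac \<rho> \<xi> s"

text \<open>The value-group sort is interpreted as the set of values v(K) (i.e. Gamma with infinity).\<close>
primrec sat :: "('k::field \<Rightarrow> ereal) \<Rightarrow> ('k \<Rightarrow> 'r::field) \<Rightarrow>
    (nat \<Rightarrow> 'k) \<Rightarrow> (nat \<Rightarrow> ereal) \<Rightarrow> (nat \<Rightarrow> 'r) \<Rightarrow> 'k fm \<Rightarrow> bool" where
  "sat v ac \<rho> \<gamma> \<xi> (FKEq s t) = (keval \<rho> s = keval \<rho> t)"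
| "sat v ac \<rho> \<gamma> \<xi> (FGLe s t) = (geval v \<rho> \<gamma> s \<le> geval v \<rho> \<gamma> t)"
| "sat v ac \<rho> \<gamma> \<xi> (FREq s t) = (reval ac \<rho> \<xi> s = reval ac \<rho> \<xi> t)"
| "sat v ac \<rho> \<gamma> \<xi> (FNot \<phi>) = (\<not> sat v ac \<rho> \<gamma> \<xi> \<phi>)"
| "sat v ac \<rho> \<gamma> \<xi> (FAnd \<phi> \<psi>) = (sat v ac \<rho> \<gamma> \<xi> \<phi> \<and> sat v ac \<rho> \<gamma> \<xi> \<psi>)"
| "sat v ac \<rho> \<gamma> \<xi> (FExK i \<phi>) = (\<exists>x. sat v ac (\<rho>(i := x)) \<gamma> \<xi> \<phi>)"
| "sat v ac \<rho> \<gamma> \<xi> (FExG i \<phi>) = (\<exists>g\<in>range v. sat v ac \<rho> (\<gamma>(i := g)) \<xi> \<phi>)"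
| "sat v ac \<rho> \<gamma> \<xi> (FExR i \<phi>) = (\<exists>r. sat v ac \<rho> \<gamma> (\<xi>(i := r)) \<phi>)"

text \<open>Points of K^n are lists of length n.  A set S of such points is L-definable (with
  parameters, which enter as constants KConst) if it is defined by a formula whose
  K-variables 0..n-1 are the coordinates; remaining free variables are assigned fixed
  values (0), which only amounts to further parameters.\<close>
definition definable :: "('k::field \<Rightarrow> ereal) \<Rightarrow> ('k \<Rightarrow> 'r::field) \<Rightarrow> nat \<Rightarrow> 'k list set \<Rightarrow> bool" where
  "definable v ac n S \<longleftrightarrow>
     (\<exists>\<phi>. S = {xs. length xs = n \<and>
                  sat v ac (\<lambda>i. if i < n then xs ! i else 0) (\<lambda>_. 0) (\<lambda>_. 0) \<phi>})"

definition definable1 :: "('k::field \<Rightarrow> ereal) \<Rightarrow> ('k \<Rightarrow> 'r::field) \<Rightarrow> 'k set \<Rightarrow> bool" where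
  "definable1 v ac E \<longleftrightarrow> definable v ac 1 ((\<lambda>t. [t]) ` E)"

definition nbhd :: "('k::field \<Rightarrow> ereal) \<Rightarrow> nat \<Rightarrow> 'k list \<Rightarrow> 'k list set \<Rightarrow> bool" where
  "nbhd v n a U \<longleftrightarrow>
     (\<exists>\<gamma>::real. {x. length x = n \<and> (\<forall>i<n. v (x ! i - a ! i) > ereal \<gamma>)} \<subseteq> U)"

definition nbhd1 :: "('k::field \<Rightarrow> ereal) \<Rightarrow> 'k \<Rightarrow> 'k set \<Rightarrow> bool" where
  "nbhd1 v a V \<longleftrightarrow> (\<exists>\<gamma>::real. {x. v (x - a) > ereal \<gamma>} \<subseteq> V)"

definition acc_point :: "('k::field \<Rightarrow> ereal) \<Rightarrow> nat \<Rightarrow> 'k list set \<Rightarrow> 'k list \<Rightarrow> bool" where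
  "acc_point v n A a \<longleftrightarrow> length a = n \<and>
     (\<forall>U. nbhd v n a U \<longrightarrow> (\<exists>x\<in>A. x \<noteq> a \<and> x \<in> U))"

definition acc_point1 :: "('k::field \<Rightarrow> ereal) \<Rightarrow> 'k set \<Rightarrow> 'k \<Rightarrow> bool" where
  "acc_point1 v E a \<longleftrightarrow> (\<forall>V. nbhd1 v a V \<longrightarrow> (\<exists>t\<in>E. t \<noteq> a \<and> t \<in> V))"

definition fiber :: "'k list set \<Rightarrow> 'k \<Rightarrow> 'k list set" where
  "fiber \<Phi> t = {y. t # y \<in> \<Phi>}"

definition fiber_shrinking ::
  "('k::field \<Rightarrow> ereal) \<Rightarrow> ('k \<Rightarrow> 'r::field) \<Rightarrow> nat \<Rightarrow> 'k list set \<Rightarrow> 'k list \<Rightarrow>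
   'k set \<Rightarrow> 'k list set \<Rightarrow> bool" where
  "fiber_shrinking v ac n A a E \<Phi> \<longleftrightarrow>
     definable1 v ac E \<and> acc_point1 v E (hd a) \<and>
     definable v ac n \<Phi> \<and> \<Phi> \<subseteq> A \<and>
     \<Phi> = (\<Union>t\<in>E. (\<lambda>y. t # y) ` fiber \<Phi> t) \<and>
     (\<forall>U. nbhd v (n - 1) (tl a) U \<longrightarrow>
        (\<exists>V. nbhd1 v (hd a) V \<and>
           (\<forall>t\<in>V \<inter> E. t \<noteq> hd a \<longrightarrow> fiber \<Phi> t \<noteq> {} \<and> fiber \<Phi> t \<subseteq> U)))"

definition perm_coords :: "(nat \<Rightarrow> nat) \<Rightarrow> 'k list \<Rightarrow> 'k list" where
  "perm_coords \<sigma> xs = map (\<lambda>i. xs ! \<sigma> i) [0..<length xs]"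

end

theory Submission
  imports Defs
begin

primrec kren :: "(nat \<Rightarrow> nat) \<Rightarrow> 'k kterm \<Rightarrow> 'k kterm" where
  "kren f (KVar i) = KVar (f i)"
| "kren f (KConst c) = KConst c"
| "kren f (KAdd s t) = KAdd (kren f s) (kren f t)"
| "kren f (KMul s t) = KMul (kren f s) (kren f t)"
| "kren f (KNeg s) = KNeg (kren f s)"

primrec gren :: "(nat \<Rightarrow> nat) \<Rightarrow> 'k gterm \<Rightarrow> 'k gterm" where
  "gren f (GVar i) = GVar i"
| "gren f (GVal t) = GVal (kren f t)"
| "gren f (GAdd s t) = GAdd (gren f s) (gren f t)"

primrec rren :: "(nat \<Rightarrow> nat) \<Rightarrow> 'k rterm \<Rightarrow> 'k rterm" where
  "rren f (RVar i) = RVar i"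
| "rren f (RAc t) = RAc (kren f t)"
| "rren f (RAdd s t) = RAdd (rren f s) (rren f t)"
| "rren f (RMul s t) = RMul (rren f s) (rren f t)"
| "rren f (RNeg s) = RNeg (rren f s)"

primrec fren :: "(nat \<Rightarrow> nat) \<Rightarrow> 'k fm \<Rightarrow> 'k fm" where
  "fren f (FKEq s t) = FKEq (kren f s) (kren f t)"
| "fren f (FGLe s t) = FGLe (gren f s) (gren f t)"
| "fren f (FREq s t) = FREq (rren f s) (rren f t)"
| "fren f (FNot p) = FNot (fren f p)"
| "fren f (FAnd p q) = FAnd (fren f p) (fren f q)"
| "fren f (FExK i p) = FExK (f i) (fren f p)"
| "fren f (FExG i p) = FExG i (fren f p)"
| "fren f (FExR i p) = FExR i (fren f p)"

lemma keval_kren: "keval \<rho> (kren f t) = keval (\<rho> \<circ> f) t"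
  by (induct t) auto

lemma geval_gren: "geval v \<rho> \<gamma> (gren f t) = geval v (\<rho> \<circ> f) \<gamma> t"
  by (induct t) (auto simp: keval_kren comp_def)

lemma reval_rren: "reval ac \<rho> \<xi> (rren f t) = reval ac (\<rho> \<circ> f) \<xi> t"
  by (induct t) (auto simp: keval_kren comp_def)

lemma sat_fren:
  assumes "inj f"
  shows "sat v ac \<rho> \<gamma> \<xi> (fren f \<phi>) = sat v ac (\<rho> \<circ> f) \<gamma> \<xi> \<phi>"
proof (induct \<phi> arbitrary: \<rho> \<gamma> \<xi>)
  case (FExK i p)
  have "\<And>x. (\<rho>(f i := x)) \<circ> f = (\<rho> \<circ> f)(i := x)"
    using assms by (auto simp: fun_eq_iff inj_eq)
  then show ?case using FExK by (simp only: fren.simps sat.simps)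
qed (auto simp: keval_kren geval_gren reval_rren)

primrec conj :: "'k fm list \<Rightarrow> 'k fm" where
  "conj [] = FKEq (KVar 0) (KVar 0)"
| "conj (p # ps) = FAnd p (conj ps)"

lemma sat_conj: "sat v ac \<rho> \<gamma> \<xi> (conj ps) \<longleftrightarrow> (\<forall>p\<in>set ps. sat v ac \<rho> \<gamma> \<xi> p)"
  by (induct ps) auto

lemma definable_len: "definable v ac n S \<Longrightarrow> xs \<in> S \<Longrightarrow> length xs = n"
  unfolding definable_def by auto

lemma definable_butlast:
  assumes "definable v ac (Suc m) S"
  shows "definable v ac m (butlast ` S)"
proof -
  obtain \<phi> where S: "S = {xs. length xs = Suc m \<and>
      sat v ac (\<lambda>i. if i < Suc m then xs ! i else 0) (\<lambda>_. 0) (\<lambda>_. 0) \<phi>}"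
    using assms unfolding definable_def by blast
  have env: "(\<lambda>i. if i < m then xs ! i else 0)(m := x)
      = (\<lambda>i. if i < Suc m then (xs @ [x]) ! i else 0)" if "length xs = m" for xs x
    using that by (auto simp: fun_eq_iff nth_append)
  have "butlast ` S = {xs. length xs = m \<and>
      sat v ac (\<lambda>i. if i < m then xs ! i else 0) (\<lambda>_. 0) (\<lambda>_. 0) (FExK m \<phi>)}"
  proof (intro set_eqI iffI)
    fix ys assume "ys \<in> butlast ` S"
    then obtain s where s: "s \<in> S" "ys = butlast s" by blast
    then have ls: "length s = Suc m" using S by auto
    then have s2: "s = ys @ [last s]" using s by (metis append_butlast_last_id list.size(3) nat.distinct(1))
    have ly: "length ys = m" using s ls by simp
    obtain z where s3: "s = ys @ [z]" using s2 by blast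
    then have zl: "z = last s" by simp
    have "sat v ac (\<lambda>i. if i < Suc m then (ys @ [z]) ! i else 0) (\<lambda>_. 0) (\<lambda>_. 0) \<phi>"
      using s(1) S s3 by auto
    then have "sat v ac ((\<lambda>i. if i < m then ys ! i else 0)(m := z)) (\<lambda>_. 0) (\<lambda>_. 0) \<phi>"
      by (simp only: env[OF ly])
    then have "\<exists>x. sat v ac ((\<lambda>i. if i < m then ys ! i else 0)(m := x)) (\<lambda>_. 0) (\<lambda>_. 0) \<phi>"
      by blast
    then show "ys \<in> {xs. length xs = m \<and>
      sat v ac (\<lambda>i. if i < m then xs ! i else 0) (\<lambda>_. 0) (\<lambda>_. 0) (FExK m \<phi>)}"
      using ly by simp
  next
    fix ys assume "ys \<in> {xs. length xs = m \<and>
      sat v ac (\<lambda>i. if i < m then xs ! i else 0) (\<lambda>_. 0) (\<lambda>_. 0) (FExK m \<phi>)}"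
    then obtain x where ly: "length ys = m" and
      h: "sat v ac ((\<lambda>i. if i < m then ys ! i else 0)(m := x)) (\<lambda>_. 0) (\<lambda>_. 0) \<phi>" by auto
    have "ys @ [x] \<in> S" using h env[OF ly, of x] ly S by auto
    moreover have "ys = butlast (ys @ [x])" by simp
    ultimately show "ys \<in> butlast ` S" by blast
  qed
  then show ?thesis unfolding definable_def by blast
qed

lemma definable_take:
  assumes "definable v ac m S" "k \<le> m"
  shows "definable v ac k (take k ` S)"
  using assms
proof (induct "m - k" arbitrary: k)
  case 0
  then have km: "k = m" by simp
  have "take k ` S = S"
  proof -
    have "\<And>s. s \<in> S \<Longrightarrow> take k s = s" using definable_len[OF 0(2)] km by auto
    then show ?thesis by (force simp: image_iff)
  qed
  then show ?case using 0 km by simp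
next
  case (Suc d)
  then have "d = m - Suc k" "Suc k \<le> m" by auto
  then have "definable v ac (Suc k) (take (Suc k) ` S)" using Suc by auto
  then have "definable v ac k (butlast ` take (Suc k) ` S)" by (rule definable_butlast)
  moreover have "butlast ` take (Suc k) ` S = take k ` S"
  proof -
    have "\<And>s. s \<in> S \<Longrightarrow> butlast (take (Suc k) s) = take k s"
      using definable_len[OF Suc(3)] \<open>Suc k \<le> m\<close> by (simp add: butlast_take)
    then show ?thesis by (simp add: image_image)
  qed
  ultimately show ?case by simp
qed

lemma perm_coords_length[simp]: "length (perm_coords \<sigma> xs) = length xs"
  by (simp add: perm_coords_def)

lemma perm_coords_nth[simp]: "i < length xs \<Longrightarrow> perm_coords \<sigma> xs ! i = xs ! \<sigma> i"
  by (simp add: perm_coords_def)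

lemma perm_coords_cancel:
  assumes "\<sigma> permutes {..<length xs}" "\<tau> permutes {..<length xs}" "\<And>i. \<sigma> (\<tau> i) = i"
  shows "perm_coords \<tau> (perm_coords \<sigma> xs) = xs"
proof (rule nth_equalityI)
  show "length (perm_coords \<tau> (perm_coords \<sigma> xs)) = length xs" by simp
  fix i assume "i < length (perm_coords \<tau> (perm_coords \<sigma> xs))"
  then have i: "i < length xs" by simp
  then have "\<tau> i < length xs" using permutes_in_image[OF assms(2)] by auto
  then show "perm_coords \<tau> (perm_coords \<sigma> xs) ! i = xs ! i" using i assms(3) by simp
qed

lemma definable_perm:
  assumes "\<sigma> permutes {..<n}" "definable v ac n A"
  shows "definable v ac n (perm_coords \<sigma> ` A)"
proof -
  obtain \<phi> where A: "A = {xs. length xs = n \<and>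
      sat v ac (\<lambda>i. if i < n then xs ! i else 0) (\<lambda>_. 0) (\<lambda>_. 0) \<phi>}"
    using assms unfolding definable_def by blast
  have ip: "inv \<sigma> permutes {..<n}" using permutes_inv[OF assms(1)] .
  have inj: "inj (inv \<sigma>)" using permutes_inj[OF ip] .
  have env: "(\<lambda>i. if i < n then y ! i else 0) \<circ> inv \<sigma>
      = (\<lambda>i. if i < n then perm_coords (inv \<sigma>) y ! i else 0)" if "length y = n" for y :: "'a list"
  proof
    fix k
    show "((\<lambda>i. if i < n then y ! i else 0) \<circ> inv \<sigma>) k
      = (if k < n then perm_coords (inv \<sigma>) y ! k else 0)"
    proof (cases "k < n")
      case True
      then have "inv \<sigma> k < n" using permutes_in_image[OF ip] by auto
      then show ?thesis using True that by simp
    next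
      case False
      then have "inv \<sigma> k = k" using permutes_not_in[OF ip] by auto
      then show ?thesis using False by simp
    qed
  qed
  have "perm_coords \<sigma> ` A = {y. length y = n \<and>
      sat v ac (\<lambda>i. if i < n then y ! i else 0) (\<lambda>_. 0) (\<lambda>_. 0) (fren (inv \<sigma>) \<phi>)}"
  proof (intro set_eqI iffI)
    fix y assume "y \<in> perm_coords \<sigma> ` A"
    then obtain x where x: "x \<in> A" "y = perm_coords \<sigma> x" by blast
    have lx: "length x = n" using x A by auto
    have "perm_coords (inv \<sigma>) y = x"
      using perm_coords_cancel[of \<sigma> x "inv \<sigma>"] assms(1) ip lx x(2) permutes_inverses(1)[OF assms(1)]
      by auto
    then show "y \<in> {y. length y = n \<and>
      sat v ac (\<lambda>i. if i < n then y ! i else 0) (\<lambda>_. 0) (\<lambda>_. 0) (fren (inv \<sigma>) \<phi>)}"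
    proof -
      have ly: "length y = n" using x lx by simp
      have "sat v ac (\<lambda>i. if i < n then perm_coords (inv \<sigma>) y ! i else 0) (\<lambda>_. 0) (\<lambda>_. 0) \<phi>"
        using x(1) A \<open>perm_coords (inv \<sigma>) y = x\<close> by auto
      then have "sat v ac ((\<lambda>i. if i < n then y ! i else 0) \<circ> inv \<sigma>) (\<lambda>_. 0) (\<lambda>_. 0) \<phi>"
        by (simp only: env[OF ly])
      then show ?thesis using ly by (simp add: sat_fren[OF inj])
    qed
  next
    fix y assume "y \<in> {y. length y = n \<and>
      sat v ac (\<lambda>i. if i < n then y ! i else 0) (\<lambda>_. 0) (\<lambda>_. 0) (fren (inv \<sigma>) \<phi>)}"
    then have ly: "length y = n" and
      h: "sat v ac (\<lambda>i. if i < n then y ! i else 0) (\<lambda>_. 0) (\<lambda>_. 0) (fren (inv \<sigma>) \<phi>)" by auto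
    have "sat v ac ((\<lambda>i. if i < n then y ! i else 0) \<circ> inv \<sigma>) (\<lambda>_. 0) (\<lambda>_. 0) \<phi>"
      using h by (simp only: sat_fren[OF inj])
    then have "sat v ac (\<lambda>i. if i < n then perm_coords (inv \<sigma>) y ! i else 0) (\<lambda>_. 0) (\<lambda>_. 0) \<phi>"
      by (simp only: env[OF ly])
    then have "perm_coords (inv \<sigma>) y \<in> A" using ly A by simp
    moreover have "perm_coords \<sigma> (perm_coords (inv \<sigma>) y) = y"
      using perm_coords_cancel[of "inv \<sigma>" y \<sigma>] assms(1) ip ly permutes_inverses(2)[OF assms(1)]
      by auto
    ultimately show "y \<in> perm_coords \<sigma> ` A" by (metis image_eqI)
  qed
  then show ?thesis unfolding definable_def by blast
qed

theorem proposition6p1: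
  fixes v :: "'k::field \<Rightarrow> ereal" and res ac :: "'k \<Rightarrow> 'r::field_char_0"
    and n :: nat and A :: "'k list set" and a :: "'k list"
  assumes "henselian_rank1_eq0_acfield v res ac"
    and "definable v ac n A"
    and "acc_point v n A a"
  shows "\<exists>\<sigma>. \<sigma> permutes {..<n} \<and>
           (\<exists>E \<Phi>. fiber_shrinking v ac n (perm_coords \<sigma> ` A) (perm_coords \<sigma> a) E \<Phi>)"
proof -
  from assms(1) have vinf: "\<And>x. v x = \<infinity> \<longleftrightarrow> x = 0"
    unfolding henselian_rank1_eq0_acfield_def by blast
  have lenA: "\<And>x. x \<in> A \<Longrightarrow> length x = n" using definable_len[OF assms(2)] by blast
  have la: "length a = n" using assms(3) acc_point_def by blast
  have acc: "\<exists>x\<in>A. x \<noteq> a \<and> (\<forall>i<n. v (x ! i - a ! i) > ereal \<gamma>)" for \<gamma> :: real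
  proof -
    have "nbhd v n a {x. length x = n \<and> (\<forall>i<n. v (x ! i - a ! i) > ereal \<gamma>)}"
      unfolding nbhd_def by blast
    then show ?thesis using assms(3) unfolding acc_point_def by blast
  qed
  have npos: "0 < n"
  proof (rule ccontr)
    assume "\<not> 0 < n"
    then have "n = 0" by simp
    obtain x where "x \<in> A" "x \<noteq> a" using acc[of 0] by blast
    then show False using lenA la \<open>n = 0\<close> by auto
  qed
  define P where "P j \<gamma> \<longleftrightarrow> (\<exists>x\<in>A. x \<noteq> a \<and> (\<forall>i<n. v (x ! i - a ! i) > ereal \<gamma>) \<and>
      (\<forall>i<n. v (x ! j - a ! j) \<le> v (x ! i - a ! i)))" for j \<gamma>
  have key: "\<exists>j<n. \<forall>\<gamma>. P j \<gamma>"
  proof (rule ccontr)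
    assume "\<not> (\<exists>j<n. \<forall>\<gamma>. P j \<gamma>)"
    then have "\<forall>j\<in>{..<n}. \<exists>\<gamma>. \<not> P j \<gamma>" by auto
    then obtain g where g: "\<forall>j\<in>{..<n}. \<not> P j (g j)" by metis
    define G where "G = Max (g ` {..<n})"
    have gG: "g j \<le> G" if "j < n" for j
      unfolding G_def using that by (intro Max_ge) auto
    obtain x where x: "x \<in> A" "x \<noteq> a" "\<forall>i<n. v (x ! i - a ! i) > ereal G"
      using acc[of G] by blast
    define f where "f i = v (x ! i - a ! i)" for i
    define m where "m = Min (f ` {..<n})"
    have "m \<in> f ` {..<n}" unfolding m_def using npos by (intro Min_in) auto
    then obtain j where j: "j < n" "f j = m" by auto
    have jmin: "\<forall>i<n. f j \<le> f i" using j unfolding m_def by (auto intro: Min_le)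
    have "P j (g j)"
      unfolding P_def
    proof (intro bexI conjI allI impI)
      fix i assume "i < n"
      have "ereal (g j) \<le> ereal G" using gG[OF j(1)] by simp
      also have "\<dots> < v (x ! i - a ! i)" using x(3) \<open>i < n\<close> by blast
      finally show "ereal (g j) < v (x ! i - a ! i)" .
    next
      fix i assume "i < n" then show "v (x ! j - a ! j) \<le> v (x ! i - a ! i)"
        using jmin unfolding f_def by blast
    qed (use x in auto)
    then show False using g j by auto
  qed
  then obtain j where j: "j < n" and Pj: "\<And>\<gamma>. P j \<gamma>" by blast
  define \<sigma> where "\<sigma> = transpose 0 j"
  have sp: "\<sigma> permutes {..<n}" unfolding \<sigma>_def using npos j by (intro permutes_swap_id) auto
  have s0: "\<sigma> 0 = j" unfolding \<sigma>_def by simp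
  have sin: "\<sigma> i < n" if "i < n" for i using permutes_in_image[OF sp] that by auto
  define B where "B = perm_coords \<sigma> ` A"
  define a' where "a' = perm_coords \<sigma> a"
  have la': "length a' = n" using la unfolding a'_def by simp
  have a'nth: "a' ! i = a ! \<sigma> i" if "i < n" for i using la that unfolding a'_def by simp
  have defB: "definable v ac n B" unfolding B_def using definable_perm[OF sp assms(2)] .
  have lenB: "\<And>y. y \<in> B \<Longrightarrow> length y = n" using definable_len[OF defB] by blast
  define \<Phi> where "\<Phi> = {y \<in> B. y ! 0 \<noteq> a' ! 0 \<and> (\<forall>i<n. v (y ! 0 - a' ! 0) \<le> v (y ! i - a' ! i))}"
  define E where "E = hd ` \<Phi>"
  have lenPhi: "\<And>y. y \<in> \<Phi> \<Longrightarrow> length y = n" using lenB unfolding \<Phi>_def by blast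
  have hda': "hd a' = a' ! 0" using la' npos by (metis hd_conv_nth list.size(3) less_not_refl)
  have close: "\<exists>y\<in>\<Phi>. v (y ! 0 - a' ! 0) > ereal \<gamma>" for \<gamma> :: real
  proof -
    obtain x where x: "x \<in> A" "x \<noteq> a" "\<forall>i<n. v (x ! i - a ! i) > ereal \<gamma>"
      and xm: "\<forall>i<n. v (x ! j - a ! j) \<le> v (x ! i - a ! i)"
      using Pj[of \<gamma>] unfolding P_def by blast
    have lx: "length x = n" using lenA x(1) by blast
    obtain i where i: "i < n" "x ! i \<noteq> a ! i"
      using x(2) lx la by (metis nth_equalityI)
    have "v (x ! i - a ! i) \<noteq> \<infinity>" using i vinf by simp
    then have "v (x ! j - a ! j) \<noteq> \<infinity>" using xm i(1)
      by (metis ereal_infty_less_eq(1))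
    then have xj: "x ! j \<noteq> a ! j" using vinf by auto
    define y where "y = perm_coords \<sigma> x"
    have ynth: "y ! i = x ! \<sigma> i" if "i < n" for i using lx that unfolding y_def by simp
    have "y \<in> \<Phi>" unfolding \<Phi>_def
    proof (intro CollectI conjI allI impI)
      show "y \<in> B" unfolding B_def y_def using x(1) by blast
      show "y ! 0 \<noteq> a' ! 0" using ynth[OF npos] a'nth[OF npos] s0 xj by simp
      fix i assume "i < n"
      then show "v (y ! 0 - a' ! 0) \<le> v (y ! i - a' ! i)"
        using ynth a'nth npos s0 xm sin by simp
    qed
    moreover have "v (y ! 0 - a' ! 0) > ereal \<gamma>"
      using ynth[OF npos] a'nth[OF npos] s0 x(3) j by simp
    ultimately show ?thesis by blast
  qed
  have defPhi: "definable v ac n \<Phi>"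
  proof -
    obtain \<psi> where B: "B = {xs. length xs = n \<and>
        sat v ac (\<lambda>i. if i < n then xs ! i else 0) (\<lambda>_. 0) (\<lambda>_. 0) \<psi>}"
      using defB unfolding definable_def by blast
    define \<Psi> where "\<Psi> = FAnd \<psi> (FAnd (FNot (FKEq (KVar 0) (KConst (a' ! 0))))
      (conj (map (\<lambda>i. FGLe (GVal (KAdd (KVar 0) (KNeg (KConst (a' ! 0)))))
                            (GVal (KAdd (KVar i) (KNeg (KConst (a' ! i)))))) [0..<n])))"
    have "\<Phi> = {xs. length xs = n \<and>
        sat v ac (\<lambda>i. if i < n then xs ! i else 0) (\<lambda>_. 0) (\<lambda>_. 0) \<Psi>}"
      unfolding \<Phi>_def \<Psi>_def B using npos by (auto simp: sat_conj)
    then show ?thesis unfolding definable_def by blast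
  qed
  have "fiber_shrinking v ac n B a' E \<Phi>"
    unfolding fiber_shrinking_def
  proof (intro conjI allI impI)
    have "(\<lambda>t. [t]) ` E = take 1 ` \<Phi>"
    proof -
      have "\<And>y. y \<in> \<Phi> \<Longrightarrow> take 1 y = [hd y]"
        using lenPhi npos by (metis One_nat_def hd_conv_nth length_greater_0_conv take_Suc_conv_app_nth take_eq_Nil append_Nil)
      then show ?thesis unfolding E_def by (simp add: image_image)
    qed
    then show "definable1 v ac E" unfolding definable1_def
      using definable_take[OF defPhi, of 1] npos by simp
    show "acc_point1 v E (hd a')" unfolding acc_point1_def
    proof (intro allI impI)
      fix V assume "nbhd1 v (hd a') V"
      then obtain \<gamma> where g: "{x. v (x - hd a') > ereal \<gamma>} \<subseteq> V" unfolding nbhd1_def by blast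
      obtain y where y: "y \<in> \<Phi>" "v (y ! 0 - a' ! 0) > ereal \<gamma>" using close by blast
      have hy: "hd y = y ! 0" using lenPhi[OF y(1)] npos by (metis hd_conv_nth list.size(3) less_not_refl)
      have "hd y \<noteq> hd a'" using y(1) hy hda' unfolding \<Phi>_def by simp
      moreover have "hd y \<in> E" using y(1) unfolding E_def by blast
      moreover have "hd y \<in> V" using g y(2) hy hda' by auto
      ultimately show "\<exists>t\<in>E. t \<noteq> hd a' \<and> t \<in> V" by blast
    qed
    show "definable v ac n \<Phi>" by (rule defPhi)
    show "\<Phi> \<subseteq> B" unfolding \<Phi>_def by blast
    show "\<Phi> = (\<Union>t\<in>E. (\<lambda>y. t # y) ` fiber \<Phi> t)"
    proof (intro set_eqI iffI)
      fix y assume y: "y \<in> \<Phi>"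
      then have "y = hd y # tl y" using lenPhi npos by (metis hd_Cons_tl list.size(3) not_less0)
      moreover have "tl y \<in> fiber \<Phi> (hd y)" using y \<open>y = hd y # tl y\<close> unfolding fiber_def by simp
      moreover have "hd y \<in> E" using y unfolding E_def by blast
      ultimately show "y \<in> (\<Union>t\<in>E. (\<lambda>y. t # y) ` fiber \<Phi> t)" by blast
    next
      fix y assume "y \<in> (\<Union>t\<in>E. (\<lambda>y. t # y) ` fiber \<Phi> t)"
      then show "y \<in> \<Phi>" unfolding fiber_def by blast
    qed
    fix U assume "nbhd v (n - 1) (tl a') U"
    then obtain \<gamma> where g: "{x. length x = n - 1 \<and> (\<forall>i<n - 1. v (x ! i - tl a' ! i) > ereal \<gamma>)} \<subseteq> U"
      unfolding nbhd_def by blast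
    show "\<exists>V. nbhd1 v (hd a') V \<and>
           (\<forall>t\<in>V \<inter> E. t \<noteq> hd a' \<longrightarrow> fiber \<Phi> t \<noteq> {} \<and> fiber \<Phi> t \<subseteq> U)"
    proof (intro exI conjI ballI impI)
      show "nbhd1 v (hd a') {x. v (x - hd a') > ereal \<gamma>}" unfolding nbhd1_def by blast
      fix t assume t: "t \<in> {x. v (x - hd a') > ereal \<gamma>} \<inter> E"
      then obtain y where y: "y \<in> \<Phi>" "t = hd y" unfolding E_def by blast
      then have "y = t # tl y" using lenPhi npos by (metis hd_Cons_tl list.size(3) not_less0)
      then show "fiber \<Phi> t \<noteq> {}" using y unfolding fiber_def by (metis empty_iff mem_Collect_eq)
      show "fiber \<Phi> t \<subseteq> U"
      proof
        fix z assume "z \<in> fiber \<Phi> t"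
        then have z: "t # z \<in> \<Phi>" unfolding fiber_def by simp
        have lz: "length z = n - 1" using lenPhi[OF z] by simp
        have "v (z ! i - tl a' ! i) > ereal \<gamma>" if "i < n - 1" for i
        proof -
          have "Suc i < n" using that by simp
          then have "v ((t # z) ! 0 - a' ! 0) \<le> v ((t # z) ! Suc i - a' ! Suc i)"
            using z unfolding \<Phi>_def by blast
          moreover have "tl a' ! i = a' ! Suc i" using la' \<open>Suc i < n\<close> by (simp add: nth_tl)
          moreover have "v (t - a' ! 0) > ereal \<gamma>" using t hda' by simp
          ultimately show ?thesis by simp
        qed
        then show "z \<in> U" using g lz by blast
      qed
    qed
  qed
  then show ?thesis using sp unfolding B_def a'_def by blast
qed

end
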